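(* Let $P,Q$ be convex polygons in the plane, with all vertices in general position, that form a weakly disjoint pair and satisfy $P\cap Q\neq\emptyset$. Then one of $P,Q$ contains a vertex of the other.
   Context: Two convex polygons $P,Q$ form a weakly disjoint pair if $P\setminus Q$ and $Q\setminus P$ are both connected sets and $P$ and $Q$ share no vertex. The convex hull of a line segment is regarded as a valid degenerate convex polygon with two edges. *)

theory Defs
  imports "HOL-Analysis.Analysis"
begin

text \<open>A convex polygon in the plane: the convex hull of a finite set of at least two
points (so that the convex hull of a segment counts as a degenerate polygon).\<close>
definition convex_polygon :: "(real^2) set \<Rightarrow> bool" where
  "convex_polygon P \<longleftrightarrow> (\<exists>S. finite S \<and> card S \<ge> 2 \<and> P = convex hull S)"

definition vertices :: "(real^2) set \<Rightarrow> (real^2) set" where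
  "vertices P = {x. x extreme_point_of P}"

definition general_position :: "(real^2) set \<Rightarrow> bool" where
  "general_position V \<longleftrightarrow>
     (\<forall>a\<in>V. \<forall>b\<in>V. \<forall>c\<in>V. a \<noteq> b \<and> a \<noteq> c \<and> b \<noteq> c \<longrightarrow> \<not> collinear {a, b, c})"

definition weakly_disjoint :: "(real^2) set \<Rightarrow> (real^2) set \<Rightarrow> bool" where
  "weakly_disjoint P Q \<longleftrightarrow>
     connected (P - Q) \<and> connected (Q - P) \<and> vertices P \<inter> vertices Q = {}"

end

theory Submission
  imports Defs
begin


lemma key:
  fixes F C :: "(real^2) set"
  assumes pF: "polytope F" and dF: "aff_dim F = 1" and a: "a \<noteq> 0"
    and FH: "F \<subseteq> {x. a \<bullet> x = b}" and cC: "convex C" and CH: "C \<subseteq> {x. a \<bullet> x = b}"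
    and CF: "C \<inter> F \<noteq> {}" and ext: "\<And>v. v extreme_point_of F \<Longrightarrow> v \<notin> C"
  shows "C \<subseteq> F"
proof (rule ccontr)
  assume "\<not> C \<subseteq> F"
  then obtain z where z: "z \<in> C" "z \<notin> F" by auto
  have Fne: "F \<noteq> {}" using dF by auto
  have cF: "convex F" "compact F" using pF polytope_imp_convex polytope_imp_compact by auto
  have ah: "affine hull F = {x. a \<bullet> x = b}"
  proof (rule affine_dim_equal)
    show "affine (affine hull F)" by simp
    show "affine {x. a \<bullet> x = b}" by (rule affine_hyperplane)
    show "affine hull F \<noteq> {}" using Fne by simp
    show "affine hull F \<subseteq> {x. a \<bullet> x = b}" using FH by (simp add: hull_minimal affine_hyperplane)
    show "aff_dim (affine hull F) = aff_dim {x. a \<bullet> x = b}" using a dF by simp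
  qed
  have rf: "rel_frontier F \<inter> C = {}"
  proof -
    have "rel_frontier F = \<Union> {G. G face_of F \<and> G \<noteq> F}"
      using pF polytope_imp_polyhedron rel_frontier_of_polyhedron_alt by blast
    moreover have "G \<inter> C = {}" if "G face_of F" "G \<noteq> F" for G
    proof -
      have "aff_dim G < 1" using face_of_aff_dim_lt[OF cF(1) that] dF by simp
      moreover have "aff_dim G \<ge> -1" by (rule aff_dim_geq)
      ultimately have "aff_dim G = -1 \<or> aff_dim G = 0" by linarith
      then show ?thesis
      proof
        assume "aff_dim G = -1" then have "G = {}" using aff_dim_empty by blast then show ?thesis by simp
      next
        assume "aff_dim G = 0"
        then obtain x where "G = {x}" using aff_dim_eq_0 by blast
        then show ?thesis using that ext face_of_singleton by blast
      qed
    qed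
    ultimately show ?thesis by blast
  qed
  obtain y where y: "y \<in> C" "y \<in> F" using CF by auto
  have "closed F" using cF compact_imp_closed by blast
  then have yri: "y \<in> rel_interior F" using y rf unfolding rel_frontier_def by auto
  have "connected C" using cC convex_connected by blast
  moreover have "openin (top_of_set C) (C \<inter> rel_interior F)"
  proof -
    have "rel_interior F \<subseteq> affine hull F"
      using rel_interior_subset[of F] hull_subset[of F affine] by (rule order_trans)
    then have e: "affine hull F \<inter> rel_interior F = rel_interior F" by blast
    have "openin (top_of_set (affine hull F)) (affine hull F \<inter> rel_interior F)"
      unfolding e by (rule openin_rel_interior)
    moreover have "C \<subseteq> affine hull F" using CH ah by simp
    ultimately show ?thesis by (rule openin_subtopology_Int_subset)
  qed
  moreover have "openin (top_of_set C) (C - F)"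
  proof -
    have "openin (top_of_set C) (C \<inter> (- F))"
      by (rule openin_open_Int) (use \<open>closed F\<close> in \<open>simp add: open_Compl\<close>)
    then show ?thesis by (simp add: Diff_eq)
  qed
  moreover have "C \<subseteq> (C \<inter> rel_interior F) \<union> (C - F)" using rf unfolding rel_frontier_def
    using \<open>closed F\<close> closure_closed by auto
  moreover have "(C \<inter> rel_interior F) \<inter> (C - F) = {}" using rel_interior_subset by blast
  ultimately show False using y yri z unfolding connected_openin by blast
qed

lemma side:
  fixes P :: "(real^2) set"
  assumes "compact P" "convex P" "P \<inter> {x. a \<bullet> x = b} \<noteq> {}" "\<And>x. x \<in> P \<Longrightarrow> a \<bullet> x \<le> b"
  shows "\<exists>v. v extreme_point_of P \<and> a \<bullet> v = b"
proof -
  let ?G = "P \<inter> {x. a \<bullet> x = b}"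
  have G: "?G face_of P" using face_of_Int_supporting_hyperplane_le assms by blast
  have "compact ?G" "convex ?G" using face_of_imp_compact face_of_imp_convex G assms by blast+
  then have "?G = convex hull {x. x extreme_point_of ?G}" by (rule Krein_Milman_Minkowski)
  then obtain v where "v extreme_point_of ?G" using assms(3) by force
  then show ?thesis using extreme_point_of_face[OF G] by blast
qed


theorem lemma3:
  fixes P Q :: "(real^2) set"
  assumes "convex_polygon P" and "convex_polygon Q"
    and "general_position (vertices P \<union> vertices Q)"
    and "weakly_disjoint P Q"
    and "P \<inter> Q \<noteq> {}"
  shows "(\<exists>v\<in>vertices P. v \<in> Q) \<or> (\<exists>v\<in>vertices Q. v \<in> P)"
proof (rule ccontr)
  assume "\<not> ?thesis"
  then have nP: "\<And>v. v extreme_point_of P \<Longrightarrow> v \<notin> Q"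
    and nQ: "\<And>v. v extreme_point_of Q \<Longrightarrow> v \<notin> P" by (auto simp: vertices_def)
  have pP: "polytope P" using assms(1) unfolding convex_polygon_def using polytope_convex_hull by blast
  have pQ: "polytope Q" using assms(2) unfolding convex_polygon_def using polytope_convex_hull by blast
  have cP: "compact P" "convex P" using pP polytope_imp_compact polytope_imp_convex by auto
  have cQ: "compact Q" "convex Q" using pQ polytope_imp_compact polytope_imp_convex by auto
  have conn: "connected (P - Q)" using assms(4) unfolding weakly_disjoint_def by blast
  have KP: "P = convex hull {x. x extreme_point_of P}" using cP Krein_Milman_Minkowski by blast
  have KQ: "Q = convex hull {x. x extreme_point_of Q}" using cQ Krein_Milman_Minkowski by blast
  have Qns: "\<not> (\<exists>q. Q = {q})"
  proof
    assume "\<exists>q. Q = {q}"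
    then obtain q where q: "Q = {q}" by blast
    then have "q extreme_point_of Q" using face_of_singleton face_of_refl by force
    then show False using nQ assms(5) q by blast
  qed
  have "\<exists>F a b. F face_of Q \<and> aff_dim F = 1 \<and> a \<noteq> 0 \<and> F \<subseteq> {x. a \<bullet> x = b}
          \<and> (\<forall>x\<in>Q. a \<bullet> x \<le> b) \<and> F \<inter> P \<noteq> {}"
  proof (cases "aff_dim Q < 2")
    case True
    have "aff_dim Q \<noteq> -1" using assms(5) aff_dim_empty by blast
    moreover have "aff_dim Q \<noteq> 0" using Qns aff_dim_eq_0 by blast
    moreover have "aff_dim Q \<ge> -1" by (rule aff_dim_geq)
    ultimately have d1: "aff_dim Q = 1" using True by linarith
    have "aff_dim Q < int DIM(real^2)" using True by simp
    then obtain a b where "a \<noteq> 0" "Q \<subseteq> {x. a \<bullet> x = b}" by (rule aff_lowdim_subset_hyperplane)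
    then show ?thesis using d1 face_of_refl[OF cQ(2)] assms(5)
      by (intro exI[of _ Q] exI[of _ a] exI[of _ b]) auto
  next
    case False
    have "aff_dim Q \<le> int DIM(real^2)" by (rule aff_dim_le_DIM)
    then have d2: "aff_dim Q = int DIM(real^2)" using False by simp
    then have "affine hull Q = UNIV" using aff_dim_eq_full by blast
    then have rfr: "rel_frontier Q = frontier Q" by (rule rel_frontier_frontier)
    obtain v where v: "v extreme_point_of P"
      using KP assms(5) by force
    have "v \<in> P" using v extreme_point_of_def by blast
    have "P \<inter> frontier Q \<noteq> {}"
    proof (rule connected_Int_frontier)
      show "connected P" using cP convex_connected by blast
      show "P \<inter> Q \<noteq> {}" by (rule assms(5))
      show "P - Q \<noteq> {}" using \<open>v \<in> P\<close> nP v by blast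
    qed
    then obtain x G where x: "x \<in> P" "x \<in> G" and G: "G face_of Q" "G \<noteq> Q"
      using rel_frontier_of_polyhedron_alt[OF polytope_imp_polyhedron[OF pQ]] rfr by blast
    have "aff_dim G < 2" using face_of_aff_dim_lt[OF cQ(2) G] d2 by simp
    moreover have "aff_dim G \<noteq> -1" using x aff_dim_empty by blast
    moreover have "aff_dim G \<noteq> 0"
    proof
      assume "aff_dim G = 0"
      then obtain y where "G = {y}" using aff_dim_eq_0 by blast
      then show False using G(1) face_of_singleton nQ x by blast
    qed
    moreover have "aff_dim G \<ge> -1" by (rule aff_dim_geq)
    ultimately have dG: "aff_dim G = 1" by linarith
    have "G exposed_face_of Q" using exposed_face_of_polyhedron[OF polytope_imp_polyhedron[OF pQ]] G by blast
    then obtain a b where ab: "Q \<subseteq> {x. a \<bullet> x \<le> b}" "G = Q \<inter> {x. a \<bullet> x = b}"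
      unfolding exposed_face_of_def by blast
    have "a \<noteq> 0"
    proof
      assume "a = 0"
      then have "b = 0" using ab x by (auto split: if_splits)
      then show False using ab \<open>a = 0\<close> G by auto
    qed
    then show ?thesis using ab dG G x by (intro exI[of _ G] exI[of _ a] exI[of _ b]) auto
  qed
  then obtain F a b where F: "F face_of Q" "aff_dim F = 1" "a \<noteq> 0" "F \<subseteq> {x. a \<bullet> x = b}"
      "\<And>x. x \<in> Q \<Longrightarrow> a \<bullet> x \<le> b" "F \<inter> P \<noteq> {}" by blast
  let ?C = "P \<inter> {x. a \<bullet> x = b}"
  have CF: "?C \<subseteq> F"
  proof (rule key)
    show "polytope F" using face_of_polytope_polytope[OF pQ F(1)] .
    show "convex ?C" using cP by (simp add: convex_Int convex_hyperplane)
    show "?C \<inter> F \<noteq> {}" using F by blast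
    show "v \<notin> ?C" if "v extreme_point_of F" for v
      using extreme_point_of_face[OF F(1)] that nQ by blast
  qed (use F in auto)
  have CQ: "?C \<subseteq> Q" using CF face_of_imp_subset[OF F(1)] by blast
  have Cne: "?C \<noteq> {}" using F(4,6) by blast
  obtain v1 where v1: "v1 extreme_point_of P" "a \<bullet> v1 > b"
  proof -
    have "\<exists>v1. v1 extreme_point_of P \<and> a \<bullet> v1 > b"
    proof (rule ccontr)
      assume "\<nexists>v1. v1 extreme_point_of P \<and> a \<bullet> v1 > b"
      then have "{x. x extreme_point_of P} \<subseteq> {x. a \<bullet> x \<le> b}" by (auto simp: not_less)
      then have "P \<subseteq> {x. a \<bullet> x \<le> b}" using KP by (metis convex_halfspace_le hull_minimal)
      then obtain v where "v extreme_point_of P" "a \<bullet> v = b" using side[OF cP Cne] by blast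
      then show False using nP CQ extreme_point_of_def by blast
    qed
    then show ?thesis using that by blast
  qed
  obtain v2 where v2: "v2 extreme_point_of P" "a \<bullet> v2 < b"
  proof -
    have "\<exists>v2. v2 extreme_point_of P \<and> a \<bullet> v2 < b"
    proof (rule ccontr)
      assume "\<nexists>v2. v2 extreme_point_of P \<and> a \<bullet> v2 < b"
      then have "{x. x extreme_point_of P} \<subseteq> {x. (-a) \<bullet> x \<le> -b}" by (auto simp: not_less)
      then have "P \<subseteq> {x. (-a) \<bullet> x \<le> -b}" using KP by (metis convex_halfspace_le hull_minimal)
      moreover have "P \<inter> {x. (-a) \<bullet> x = -b} \<noteq> {}" using Cne by auto
      ultimately obtain v where "v extreme_point_of P" "(-a) \<bullet> v = -b" using side[OF cP] by blast
      then show False using nP CQ extreme_point_of_def by auto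
    qed
    then show ?thesis using that by blast
  qed
  have m1: "v1 \<in> P - Q" using v1 nP extreme_point_of_def by blast
  have m2: "v2 \<in> P - Q" using v2 nP extreme_point_of_def by blast
  let ?S = "P - Q"
  have o1: "openin (top_of_set ?S) (?S \<inter> {x. a \<bullet> x > b})"
    by (rule openin_open_Int) (simp add: open_halfspace_gt)
  have o2: "openin (top_of_set ?S) (?S \<inter> {x. a \<bullet> x < b})"
    by (rule openin_open_Int) (simp add: open_halfspace_lt)
  have cov: "?S \<subseteq> (?S \<inter> {x. a \<bullet> x > b}) \<union> (?S \<inter> {x. a \<bullet> x < b})"
  proof
    fix x assume x: "x \<in> ?S"
    then have "a \<bullet> x \<noteq> b" using CQ by blast
    then show "x \<in> (?S \<inter> {x. a \<bullet> x > b}) \<union> (?S \<inter> {x. a \<bullet> x < b})" using x by auto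
  qed
  have "(?S \<inter> {x. a \<bullet> x > b}) \<inter> (?S \<inter> {x. a \<bullet> x < b}) = {}" by auto
  then show False using conn o1 o2 cov m1 m2 v1(2) v2(2) unfolding connected_openin by blast
qed

end
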